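(* Let $\mu>0$, $\alpha>0$, $f(x)=xe^{-x}$, and let $\beta\in L^\infty_+(0,+\infty)$ satisfy $\int_0^{\infty}\beta(a)e^{-\mu a}\,da=1$. Let $a^\star=\sup\{a>0:\int_a^\infty\beta(\sigma)e^{-\mu\sigma}\,d\sigma>0\}$ and $\widehat M_0=\{u\in L^1_+(0,\infty):\int_0^{a^\star}u(a)\,da>0\}$. For each $u_0\in\widehat M_0$, there exists $t_0=t_0(u_0)>0$ such that $b(t)>0$ for all $t\ge t_0$, where $b$ is the unique continuous solution of $$b(t)=\alpha f\Big(\int_t^\infty\beta(a)e^{-\mu t}u_0(a-t)\,da+\int_0^t\beta(a)e^{-\mu a}b(t-a)\,da\Big),\quad t\ge0$$ (equivalently, $\int_0^\infty\beta(a)u(t,a)\,da>0$ for all $t\ge t_0$, where $u$ is the solution of the age-structured model below).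
   Context: The model is $\partial_tu+\partial_au=-\mu u$ ($t,a>0$), $u(t,0)=\alpha f(\int_0^\infty\beta(a)u(t,a)\,da)$, $u(0,\cdot)=u_0$, with solution $u(t,a)=e^{-\mu t}u_0(a-t)$ for $a\ge t$ and $u(t,a)=e^{-\mu a}b(t-a)$ for $a\le t$; thus $b(t)=u(t,0)=\alpha f(\int_0^\infty\beta(a)u(t,a)\,da)$. *)

theory Defs
  imports "HOL-Analysis.Analysis"
begin

definition fR :: "real \<Rightarrow> real" where
  "fR x = x * exp (- x)"

definition a_star :: "real \<Rightarrow> (real \<Rightarrow> real) \<Rightarrow> ereal" where
  "a_star \<mu> \<beta> = Sup (ereal ` {a. 0 < a \<and> (LINT s:{a<..}|lborel. \<beta> s * exp (- \<mu> * s)) > 0})"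

definition in_M0 :: "real \<Rightarrow> (real \<Rightarrow> real) \<Rightarrow> (real \<Rightarrow> real) \<Rightarrow> bool" where
  "in_M0 \<mu> \<beta> u0 \<longleftrightarrow>
     set_integrable lborel {0<..} u0 \<and> (\<forall>a>0. 0 \<le> u0 a) \<and>
     (LINT a:{a. 0 < a \<and> ereal a < a_star \<mu> \<beta>}|lborel. u0 a) > 0"

end

theory Submission
  imports Defs
begin

lemma fR_pos_iff: "fR x > 0 \<longleftrightarrow> x > 0"
  unfolding fR_def by (simp add: zero_less_mult_iff)

lemma fR_nonneg_iff: "fR x \<ge> 0 \<longleftrightarrow> x \<ge> 0"
  unfolding fR_def by (simp add: zero_le_mult_iff)

lemma fR_zero_iff: "fR x = 0 \<longleftrightarrow> x = 0"
  unfolding fR_def by simp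

lemma fR_lower: assumes "x < 0" "- x \<le> K" shows "fR x \<ge> x * exp K"
proof -
  have "exp (-x) \<le> exp K" using assms by simp
  then show ?thesis unfolding fR_def using assms by (simp add: mult_left_mono_neg)
qed

lemma set_int_nonneg:
  fixes f :: "'a \<Rightarrow> real"
  assumes "\<And>x. x \<in> A \<Longrightarrow> 0 \<le> f x"
  shows "0 \<le> (LINT x:A|M. f x)"
  unfolding set_lebesgue_integral_def
  by (rule integral_nonneg_AE) (auto simp: indicator_def assms)

locale agemodel =
  fixes \<mu> \<alpha> :: real and \<beta> u0 b :: "real \<Rightarrow> real" and C :: real
  assumes mu_pos: "\<mu> > 0" and alpha_pos: "\<alpha> > 0"
    and beta_meas[measurable]: "\<beta> \<in> borel_measurable borel"
    and beta_nonneg: "\<And>a. a > 0 \<Longrightarrow> 0 \<le> \<beta> a"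
    and beta_bdd: "\<And>a. a > 0 \<Longrightarrow> \<beta> a \<le> C"
    and beta_norm: "(LINT a:{0<..}|lborel. \<beta> a * exp (- \<mu> * a)) = 1"
    and u0_M0: "in_M0 \<mu> \<beta> u0"
    and b_cont: "continuous_on {0..} b"
    and b_eq: "\<And>t. t \<ge> 0 \<Longrightarrow> b t = \<alpha> * fR ((LINT a:{t<..}|lborel. \<beta> a * exp (- \<mu> * t) * u0 (a - t))
                                 + (LINT a:{0<..<t}|lborel. \<beta> a * exp (- \<mu> * a) * b (t - a)))"
begin

definition F where "F t = (LINT a:{t<..}|lborel. \<beta> a * exp (- \<mu> * t) * u0 (a - t))"
definition G where "G t = (LINT a:{0<..<t}|lborel. \<beta> a * exp (- \<mu> * a) * b (t - a))"
definition v where "v x = indicator {0<..} x * u0 x"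

lemma C_nonneg: "C \<ge> 0" using beta_nonneg[of 1] beta_bdd[of 1] by simp

lemma bI: "t \<ge> 0 \<Longrightarrow> b t = \<alpha> * fR (F t + G t)"
  using b_eq unfolding F_def G_def by blast

lemma v_meas[measurable]: "v \<in> borel_measurable borel"
proof -
  have "(\<lambda>x. indicator {0<..} x *\<^sub>R u0 x) \<in> borel_measurable lborel"
    using u0_M0 unfolding in_M0_def set_integrable_def by (intro borel_measurable_integrable) simp
  then show ?thesis unfolding v_def by simp
qed

lemma v_int: "integrable lborel v"
  using u0_M0 unfolding in_M0_def set_integrable_def v_def by simp

lemma v_nonneg: "v x \<ge> 0"
  using u0_M0 unfolding in_M0_def v_def by (auto simp: indicator_def)

lemma F_nonneg: "t \<ge> 0 \<Longrightarrow> F t \<ge> 0"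
  unfolding F_def
  using u0_M0 beta_nonneg unfolding in_M0_def
  by (intro set_int_nonneg) auto

lemma F_alt: "t \<ge> 0 \<Longrightarrow> F t = (LINT a|lborel. \<beta> a * exp (- \<mu> * t) * v (a - t))"
  unfolding F_def set_lebesgue_integral_def v_def
  by (intro arg_cong[where f="integral\<^sup>L lborel"]) (auto simp: indicator_def fun_eq_iff)

lemma F_int: "t \<ge> 0 \<Longrightarrow> integrable lborel (\<lambda>a. \<beta> a * exp (- \<mu> * t) * v (a - t))"
proof (rule Bochner_Integration.integrable_bound)
  assume t: "t \<ge> 0"
  show "integrable lborel (\<lambda>a. C * exp (- \<mu> * t) * v (a - t))"
    using lborel_integrable_real_affine[OF v_int, of 1 "-t"] by simp
  show "(\<lambda>a. \<beta> a * exp (- \<mu> * t) * v (a - t)) \<in> borel_measurable lborel" by simp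
  show "AE a in lborel. norm (\<beta> a * exp (- \<mu> * t) * v (a - t)) \<le> norm (C * exp (- \<mu> * t) * v (a - t))"
  proof (intro AE_I2)
    fix a
    show "norm (\<beta> a * exp (- \<mu> * t) * v (a - t)) \<le> norm (C * exp (- \<mu> * t) * v (a - t))"
    proof (cases "a > t")
      case True
      then have "a > 0" using t by simp
      then have h1: "0 \<le> \<beta> a" "\<beta> a \<le> C" using beta_nonneg[of a] beta_bdd[of a] by auto
      have h2: "0 \<le> exp (- \<mu> * t) * v (a - t)" using v_nonneg[of "a-t"] by simp
      have "\<beta> a * (exp (- \<mu> * t) * v (a - t)) \<le> C * (exp (- \<mu> * t) * v (a - t))"
        using h1 h2 by (rule_tac mult_right_mono) auto
      moreover have "0 \<le> \<beta> a * (exp (- \<mu> * t) * v (a - t))" using h1 h2 by simp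
      ultimately have le: "\<beta> a * (exp (- \<mu> * t) * v (a - t)) \<le> C * (exp (- \<mu> * t) * v (a - t))"
        and nn: "0 \<le> \<beta> a * (exp (- \<mu> * t) * v (a - t))" by auto
      have "norm (\<beta> a * exp (- \<mu> * t) * v (a - t)) = \<beta> a * (exp (- \<mu> * t) * v (a - t))"
        using nn by (simp only: real_norm_def mult.assoc abs_of_nonneg)
      also have "\<dots> \<le> norm (C * exp (- \<mu> * t) * v (a - t))"
        using le abs_ge_self[of "C * (exp (- \<mu> * t) * v (a - t))"] by (simp only: real_norm_def mult.assoc)
      finally show ?thesis .
    next
      case False
      then have "v (a - t) = 0" by (simp add: v_def)
      then show ?thesis by simp
    qed
  qed
qed

lemma b_bound: "\<exists>M\<ge>0. \<forall>x\<in>{0..T}. \<bar>b x\<bar> \<le> M"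
proof -
  have "compact (b ` {0..T})"
    by (rule compact_continuous_image[OF continuous_on_subset[OF b_cont]]) auto
  then obtain M where "M > 0" "\<forall>y\<in>b ` {0..T}. norm y \<le> M"
    using compact_imp_bounded bounded_pos by metis
  then show ?thesis by (intro exI[of _ M]) auto
qed

lemma set_int_bdd:
  fixes f :: "real \<Rightarrow> real"
  assumes "set_borel_measurable lborel {0<..<s} f" "\<And>x. x \<in> {0<..<s} \<Longrightarrow> \<bar>f x\<bar> \<le> B"
  shows "set_integrable lborel {0<..<s} f"
proof -
  have fin: "emeasure lborel {0<..<s} < \<infinity>"
  proof (cases "0 \<le> s")
    case True then show ?thesis by simp
  next
    case False then have "{0<..<s} = {}" by auto
    then show ?thesis by simp
  qed
  show ?thesis unfolding set_integrable_def
  using assms fin unfolding set_borel_measurable_def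
  by (intro integrableI_bounded_set[where A="{0<..<s}" and B=B])
     (auto simp: indicator_def)
qed

lemma G_meas: "set_borel_measurable lborel {0<..<t} (\<lambda>a. \<beta> a * exp (- \<mu> * a) * b (t - a))"
proof -
  have "(\<lambda>x. indicator {0<..<t} x *\<^sub>R b x) \<in> borel_measurable borel"
    by (rule borel_measurable_continuous_on_indicator)
       (auto intro: continuous_on_subset[OF b_cont])
  then have m: "(\<lambda>a. indicator {0<..<t} (t - a) *\<^sub>R b (t - a)) \<in> borel_measurable borel"
    by (rule measurable_compose[rotated]) simp
  have eq: "(\<lambda>a. indicator {0<..<t} a *\<^sub>R (\<beta> a * exp (- \<mu> * a) * b (t - a)))
        = (\<lambda>a. \<beta> a * exp (- \<mu> * a) * (indicator {0<..<t} (t - a) *\<^sub>R b (t - a)))"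
    by (auto simp: fun_eq_iff indicator_def)
  show ?thesis unfolding set_borel_measurable_def eq using m by simp
qed

lemma g_le: "a > 0 \<Longrightarrow> \<beta> a * exp (- \<mu> * a) \<le> C"
proof -
  assume a: "a > 0"
  have "exp (- \<mu> * a) \<le> 1" using a mu_pos by simp
  then have "\<beta> a * exp (- \<mu> * a) \<le> \<beta> a * 1" using beta_nonneg[OF a] by (intro mult_left_mono) auto
  then show ?thesis using beta_bdd[OF a] by simp
qed

lemma g_nonneg: "a > 0 \<Longrightarrow> 0 \<le> \<beta> a * exp (- \<mu> * a)"
  using beta_nonneg by simp

lemma G_int: assumes t: "t \<ge> 0"
  shows "set_integrable lborel {0<..<t} (\<lambda>a. \<beta> a * exp (- \<mu> * a) * b (t - a))"
proof -
  obtain M where M: "M \<ge> 0" "\<forall>x\<in>{0..t}. \<bar>b x\<bar> \<le> M" using b_bound by blast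
  show ?thesis
  proof (rule set_int_bdd[OF G_meas])
    fix a assume a: "a \<in> {0<..<t}"
    then have "\<bar>b (t - a)\<bar> \<le> M" using M by auto
    moreover have "\<bar>\<beta> a * exp (- \<mu> * a)\<bar> \<le> C" using g_le g_nonneg a by auto
    ultimately show "\<bar>\<beta> a * exp (- \<mu> * a) * b (t - a)\<bar> \<le> C * M"
      unfolding abs_mult using M C_nonneg by (intro mult_mono) auto
  qed
qed

lemma G_nonneg: assumes "t \<ge> 0" "\<And>s. 0 < s \<Longrightarrow> s < t \<Longrightarrow> b s \<ge> 0" shows "G t \<ge> 0"
  unfolding G_def using assms g_nonneg by (intro set_int_nonneg) auto

lemma b_step: assumes "t \<ge> 0" "\<And>s. 0 < s \<Longrightarrow> s < t \<Longrightarrow> b s \<ge> 0" shows "b t \<ge> 0"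
proof -
  have "F t + G t \<ge> 0" using F_nonneg G_nonneg assms by (simp add: add_nonneg_nonneg)
  then show ?thesis using bI[OF assms(1)] alpha_pos fR_nonneg_iff by simp
qed


lemma b_nonneg: "t \<ge> 0 \<Longrightarrow> b t \<ge> 0"
proof (rule ccontr)
  assume t0: "t \<ge> 0" and "\<not> b t \<ge> 0"
  define S where "S = {s. 0 \<le> s \<and> b s < 0}"
  have Sne: "S \<noteq> {}" using t0 \<open>\<not> b t \<ge> 0\<close> unfolding S_def by auto
  have Sbdd: "bdd_below S" unfolding S_def by (rule bdd_belowI[of _ 0]) auto
  define t1 where "t1 = Inf S"
  have t1_nn: "t1 \<ge> 0" unfolding t1_def using Sne by (intro cInf_greatest) (auto simp: S_def)
  have below: "b s \<ge> 0" if "0 \<le> s" "s < t1" for s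
  proof (rule ccontr)
    assume "\<not> b s \<ge> 0"
    then have "s \<in> S" using that unfolding S_def by auto
    then have "t1 \<le> s" unfolding t1_def using Sbdd by (rule cInf_lower)
    then show False using that by simp
  qed
  have bt1: "b t1 \<ge> 0" using t1_nn below by (rule_tac b_step) auto
  obtain M where M: "M \<ge> 0" "\<forall>x\<in>{0..t1+1}. \<bar>b x\<bar> \<le> M" using b_bound by blast
  define K where "K = C * M * (t1 + 1)"
  define D where "D = \<alpha> * exp K * C"
  have D_nn: "D \<ge> 0" unfolding D_def using alpha_pos C_nonneg by simp
  define h where "h = 1 / (D + 1)"
  have h_pos: "h > 0" and h_le: "h \<le> 1" unfolding h_def using D_nn by auto
  have Dh: "D * h < 1" unfolding h_def using D_nn by (simp add: field_simps)
  obtain s' where s': "s' \<in> S" "s' < t1 + h"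
    using cInf_less_iff[OF Sne Sbdd, of "t1 + h"] h_pos unfolding t1_def by auto
  have s'_ge: "t1 \<le> s'" unfolding t1_def using s'(1) Sbdd by (rule cInf_lower)
  obtain s where s: "s \<in> {t1..t1+h}" and smin: "\<And>y. y \<in> {t1..t1+h} \<Longrightarrow> b s \<le> b y"
    using continuous_attains_inf[of "{t1..t1+h}" b] continuous_on_subset[OF b_cont, of "{t1..t1+h}"]
      t1_nn h_pos by auto
  have bs_neg: "b s < 0"
    using smin[of s'] s' s'_ge unfolding S_def by auto
  have s_gt: "s > t1" using s bs_neg bt1 by (cases "s = t1") auto
  have s_nn: "s \<ge> 0" using s_gt t1_nn by simp
  define I where "I = F s + G s"
  have bsI: "b s = \<alpha> * fR I" unfolding I_def using bI[OF s_nn] .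
  have I_neg: "I < 0"
  proof (rule ccontr)
    assume "\<not> I < 0"
    then have "fR I \<ge> 0" using fR_nonneg_iff by simp
    then have "\<alpha> * fR I \<ge> 0" using alpha_pos by simp
    then show False using bsI bs_neg by simp
  qed
  have Gint: "set_integrable lborel {0<..<s} (\<lambda>a. \<beta> a * exp (- \<mu> * a) * b (s - a))"
    using G_int[OF s_nn] .
  have fin: "emeasure lborel {0<..<s} \<noteq> \<infinity>" using s_nn by simp
  have "G s \<ge> -K"
  proof -
    have "(LINT a:{0<..<s}|lborel. - (C * M)) \<le> G s"
      unfolding G_def
    proof (rule set_integral_mono)
      show "set_integrable lborel {0<..<s} (\<lambda>a. - (C * M))"
        by (rule set_int_bdd[where B="C*M"]) (use C_nonneg M in \<open>auto simp: set_borel_measurable_def\<close>)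
      show "set_integrable lborel {0<..<s} (\<lambda>a. \<beta> a * exp (- \<mu> * a) * b (s - a))" using Gint .
      fix a assume a: "a \<in> {0<..<s}"
      then have "\<bar>b (s - a)\<bar> \<le> M" using M s h_le by (intro bspec[OF M(2)]) auto
      moreover have "\<bar>\<beta> a * exp (- \<mu> * a)\<bar> \<le> C" using g_le g_nonneg a by auto
      ultimately have "\<bar>\<beta> a * exp (- \<mu> * a) * b (s - a)\<bar> \<le> C * M"
        unfolding abs_mult using M C_nonneg by (intro mult_mono) auto
      then show "- (C * M) \<le> \<beta> a * exp (- \<mu> * a) * b (s - a)" by linarith
    qed
    also have "(LINT a:{0<..<s}|lborel. - (C * M)) = - (C * M * s)"
      using set_integral_const[of "{0<..<s}" lborel "- (C * M)"] fin s_nn by simp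
    finally have "- (C * M * s) \<le> G s" .
    moreover have "C * M * s \<le> C * M * (t1 + 1)"
      using s h_le C_nonneg M by (intro mult_left_mono) auto
    ultimately show ?thesis unfolding K_def by linarith
  qed
  then have mI: "- I \<le> K" unfolding I_def using F_nonneg[OF s_nn] by linarith
  have bs_ge: "b s \<ge> \<alpha> * exp K * I"
  proof -
    have "\<alpha> * (I * exp K) \<le> \<alpha> * fR I"
      using fR_lower[OF I_neg mI] alpha_pos by (intro mult_left_mono) auto
    then show ?thesis using bsI by (simp add: algebra_simps)
  qed
  have "G s \<ge> C * b s * (s - t1)"
  proof -
    let ?l = "\<lambda>a. C * b s * indicator {0<..<s - t1} a"
    have "(LINT a:{0<..<s}|lborel. ?l a) \<le> G s"
      unfolding G_def
    proof (rule set_integral_mono)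
      show "set_integrable lborel {0<..<s} ?l"
        by (rule set_int_bdd[where B="\<bar>C * b s\<bar>"])
           (auto simp: set_borel_measurable_def indicator_def)
      show "set_integrable lborel {0<..<s} (\<lambda>a. \<beta> a * exp (- \<mu> * a) * b (s - a))" using Gint .
      fix a assume a: "a \<in> {0<..<s}"
      show "?l a \<le> \<beta> a * exp (- \<mu> * a) * b (s - a)"
      proof (cases "a < s - t1")
        case True
        then have "s - a \<in> {t1..t1+h}" using s a by auto
        then have "b s \<le> b (s - a)" by (rule smin)
        then have "\<beta> a * exp (- \<mu> * a) * b s \<le> \<beta> a * exp (- \<mu> * a) * b (s - a)"
          using g_nonneg a by (intro mult_left_mono) auto
        moreover have "C * b s \<le> \<beta> a * exp (- \<mu> * a) * b s"
          using g_le a bs_neg by (intro mult_right_mono_neg) auto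
        ultimately show ?thesis using True a by (simp add: indicator_def)
      next
        case False
        then have "b (s - a) \<ge> 0"
          using below[of "s - a"] bt1 a by (cases "s - a = t1") auto
        then show ?thesis using False g_nonneg a by (simp add: indicator_def)
      qed
    qed
    also have "(LINT a:{0<..<s}|lborel. ?l a) = C * b s * (s - t1)"
    proof -
      have "(LINT a:{0<..<s}|lborel. ?l a) = (LINT a:{0<..<s - t1}|lborel. C * b s)"
        unfolding set_lebesgue_integral_def
        by (intro arg_cong[where f="integral\<^sup>L lborel"]) (use t1_nn in \<open>auto simp: fun_eq_iff indicator_def\<close>)
      also have "\<dots> = C * b s * (s - t1)"
        using set_integral_const[of "{0<..<s - t1}" lborel "C * b s"] s_gt by (simp add: mult.commute)
      finally show ?thesis .
    qed
    finally show ?thesis .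
  qed
  moreover have "C * b s * (s - t1) \<ge> C * b s * h"
    using s C_nonneg bs_neg by (intro mult_left_mono_neg) (auto simp: mult_nonneg_nonpos)
  ultimately have "I \<ge> C * h * b s" unfolding I_def using F_nonneg[OF s_nn] by (simp add: algebra_simps)
  then have "\<alpha> * exp K * I \<ge> \<alpha> * exp K * (C * h * b s)"
    using alpha_pos by (intro mult_left_mono) auto
  then have "b s \<ge> D * h * b s" using bs_ge unfolding D_def by (simp add: algebra_simps)
  then have "(1 - D * h) * b s \<ge> 0" by (simp add: algebra_simps)
  then have "b s \<ge> 0" using Dh by (simp add: zero_le_mult_iff)
  then show False using bs_neg by simp
qed

definition U where "U x = (\<integral>\<^sup>+ s. ennreal (indicator {..<x} s * v s) \<partial>lborel)"

lemma U_mono: "x \<le> y \<Longrightarrow> U x \<le> U y"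
  unfolding U_def
  by (intro nn_integral_mono ennreal_leI) (auto simp: indicator_def v_nonneg)

lemma U_shift: "(\<integral>\<^sup>+ t. ennreal (indicator {0<..} t * v (a - t)) \<partial>lborel) = U a"
proof -
  have m: "(\<lambda>t. ennreal (indicator {0<..} t * v (a - t))) \<in> borel_measurable borel" by measurable
  have "(\<integral>\<^sup>+ t. ennreal (indicator {0<..} t * v (a - t)) \<partial>lborel)
      = (\<integral>\<^sup>+ x. ennreal (indicator {0<..} (a + (- 1) * x) * v (a - (a + (- 1) * x))) \<partial>lborel)"
    using nn_integral_real_affine[OF m, of "- 1" a] by simp
  also have "\<dots> = U a" unfolding U_def
    by (intro nn_integral_cong) (auto simp: indicator_def)
  finally show ?thesis .
qed

lemma pos_somewhere: "\<exists>t\<ge>0. b t > 0"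
proof (rule ccontr)
  assume "\<not> (\<exists>t\<ge>0. b t > 0)"
  then have b0: "b t = 0" if "t \<ge> 0" for t using b_nonneg[OF that] that by force
  have G0: "G t = 0" if t: "t \<ge> 0" for t
  proof -
    have "G t = (LINT a:{0<..<t}|lborel. 0)" unfolding G_def
      by (rule set_lebesgue_integral_cong) (auto simp: b0)
    then show ?thesis by simp
  qed
  have F0: "F t = 0" if t: "t \<ge> 0" for t
    using bI[OF t] b0[OF t] G0[OF t] alpha_pos fR_zero_iff by simp
  define f where "f a t = ennreal (indicator {0<..} t * \<beta> a * v (a - t))" for a t
  have fmeas: "case_prod f \<in> borel_measurable (lborel \<Otimes>\<^sub>M lborel)"
    unfolding f_def by measurable
  have fmeas2: "(\<lambda>x. f (fst x) (snd x)) \<in> borel_measurable (borel \<Otimes>\<^sub>M borel)"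
    unfolding f_def by measurable
  have inner0: "(\<integral>\<^sup>+ a. f a t \<partial>lborel) = 0" for t
  proof (cases "t > 0")
    case False then show ?thesis by (simp add: f_def)
  next
    case True
    have nn: "0 \<le> \<beta> a * exp (- \<mu> * t) * v (a - t)" for a
    proof (cases "a > t")
      case True then show ?thesis using beta_nonneg[of a] \<open>t > 0\<close> v_nonneg by simp
    qed (simp add: v_def)
    have "(LINT a|lborel. \<beta> a * exp (- \<mu> * t) * v (a - t)) = 0"
      using F0[of t] F_alt[of t] True by simp
    then have "AE a in lborel. \<beta> a * exp (- \<mu> * t) * v (a - t) = 0"
      using integral_nonneg_eq_0_iff_AE[OF F_int] nn True by simp
    then have "AE a in lborel. f a t = 0"
      by eventually_elim (use True in \<open>auto simp add: f_def\<close>)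
    then show ?thesis by (simp add: nn_integral_cong_AE)
  qed
  have "(\<integral>\<^sup>+ a. (\<integral>\<^sup>+ t. f a t \<partial>lborel) \<partial>lborel) = (\<integral>\<^sup>+ t. (\<integral>\<^sup>+ a. f a t \<partial>lborel) \<partial>lborel)"
    using lborel_pair.Fubini'[OF fmeas] by simp
  also have "\<dots> = 0" by (simp add: inner0)
  finally have "AE a in lborel. (\<integral>\<^sup>+ t. f a t \<partial>lborel) = 0"
    using lborel.borel_measurable_nn_integral[OF fmeas]
    by (subst (asm) nn_integral_0_iff_AE) simp_all
  then have AEbU: "AE a in lborel. a > 0 \<longrightarrow> ennreal (\<beta> a) * U a = 0"
  proof eventually_elim
    case (elim a)
    show ?case
    proof
      assume a: "a > 0"
      have "(\<integral>\<^sup>+ t. f a t \<partial>lborel) = (\<integral>\<^sup>+ t. ennreal (\<beta> a) * ennreal (indicator {0<..} t * v (a - t)) \<partial>lborel)"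
        unfolding f_def using beta_nonneg[OF a] v_nonneg
        by (intro nn_integral_cong) (simp add: ennreal_mult[symmetric] mult_ac)
      also have "\<dots> = ennreal (\<beta> a) * U a"
        by (subst nn_integral_cmult) (simp_all add: U_shift)
      finally show "ennreal (\<beta> a) * U a = 0" using elim by simp
    qed
  qed
  define Aset where "Aset = {a. 0 < a \<and> (LINT s:{a<..}|lborel. \<beta> s * exp (- \<mu> * s)) > 0}"
  have astar: "a_star \<mu> \<beta> = Sup (ereal ` Aset)" unfolding a_star_def Aset_def ..
  obtain q0 where q0: "0 < q0" "ereal q0 < a_star \<mu> \<beta>" "U q0 \<noteq> 0"
  proof (rule ccontr)
    assume nt: "\<not> thesis"
    note th = that
    have Uq: "U q = 0" if "0 < q" "ereal q < a_star \<mu> \<beta>" for q using th[of q] nt that by auto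
    define Q where "Q = {q \<in> \<rat>. 0 < q \<and> ereal q < a_star \<mu> \<beta>}"
    have cQ: "countable Q" unfolding Q_def
      by (rule countable_subset[OF _ countable_rat]) auto
    have "\<forall>q\<in>Q. AE s in lborel. s < q \<longrightarrow> v s = 0"
    proof
      fix q assume "q \<in> Q"
      then have "U q = 0" using Uq unfolding Q_def by auto
      then have "AE s in lborel. ennreal (indicator {..<q} s * v s) = 0"
        unfolding U_def by (subst (asm) nn_integral_0_iff_AE) auto
      then show "AE s in lborel. s < q \<longrightarrow> v s = 0"
        by eventually_elim (auto simp: indicator_def v_nonneg)
    qed
    then have "AE s in lborel. \<forall>q\<in>Q. s < q \<longrightarrow> v s = 0"
      by (subst AE_ball_countable[OF cQ])
    then have "AE s in lborel. indicator {a. 0 < a \<and> ereal a < a_star \<mu> \<beta>} s *\<^sub>R u0 s = 0"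
    proof eventually_elim
      case (elim s)
      show ?case
      proof (cases "0 < s \<and> ereal s < a_star \<mu> \<beta>")
        case True
        then obtain z where z: "ereal s < ereal z" "ereal z < a_star \<mu> \<beta>" using ereal_dense2 by blast
        then obtain q where q: "q \<in> \<rat>" "s < q" "q < z" using Rats_dense_in_real[of s z] by auto
        have "q \<in> Q" unfolding Q_def using q z True
          by (auto intro: order.strict_trans[of _ "ereal z"])
        then have "v s = 0" using elim q by blast
        then show ?thesis using True by (simp add: v_def)
      qed simp
    qed
    then have "(LINT a:{a. 0 < a \<and> ereal a < a_star \<mu> \<beta>}|lborel. u0 a) = 0"
      unfolding set_lebesgue_integral_def by (rule integral_eq_zero_AE)
    then show False using u0_M0 unfolding in_M0_def by simp
  qed
  obtain a1 where a1: "a1 \<in> Aset" "q0 < a1"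
    using q0(2) unfolding astar less_Sup_iff by auto
  have "AE s in lborel. indicator {a1<..} s *\<^sub>R (\<beta> s * exp (- \<mu> * s)) = 0"
    using AEbU
  proof eventually_elim
    case (elim s)
    show ?case
    proof (cases "s > a1")
      case True
      then have s0: "s > 0" using a1 unfolding Aset_def by auto
      have "U s \<ge> U q0" using True a1 by (intro U_mono) simp
      then have "U s \<noteq> 0" using q0(3) by (auto simp: le_zero_eq)
      then have "ennreal (\<beta> s) = 0" using elim s0 by simp
      then have "\<beta> s = 0" using beta_nonneg[OF s0] by simp
      then show ?thesis by simp
    qed simp
  qed
  then have "(LINT s:{a1<..}|lborel. \<beta> s * exp (- \<mu> * s)) = 0"
    unfolding set_lebesgue_integral_def by (rule integral_eq_zero_AE)
  then show False using a1 unfolding Aset_def by simp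
qed

lemma b_pos_nbhd: assumes t: "t \<ge> 0" and bt: "b t > 0"
  shows "\<exists>d>0. \<forall>x. x \<ge> 0 \<and> \<bar>x - t\<bar> < d \<longrightarrow> b x > 0"
proof -
  obtain d where d: "d > 0" "\<forall>x'\<in>{0..}. dist x' t < d \<longrightarrow> dist (b x') (b t) < b t"
    using b_cont t bt unfolding continuous_on_iff by fastforce
  show ?thesis
  proof (intro exI[of _ d] conjI allI impI)
    fix x assume x: "x \<ge> 0 \<and> \<bar>x - t\<bar> < d"
    then have "dist (b x) (b t) < b t" using d by (auto simp: dist_real_def)
    then show "b x > 0" by (auto simp: dist_real_def)
  qed (rule d)
qed

lemma pos_interval: "\<exists>s0 L. s0 \<ge> 0 \<and> L > 0 \<and> (\<forall>s. s0 < s \<and> s < s0 + L \<longrightarrow> b s > 0)"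
proof -
  obtain t where t: "t \<ge> 0" "b t > 0" using pos_somewhere by blast
  obtain d where d: "d > 0" "\<forall>x. x \<ge> 0 \<and> \<bar>x - t\<bar> < d \<longrightarrow> b x > 0"
    using b_pos_nbhd[OF t] by blast
  show ?thesis
    by (rule exI[of _ t], rule exI[of _ d]) (use t d in auto)
qed

definition E where "E = {a. 0 < a \<and> 0 < \<beta> a}"
definition P where "P = {p. 0 < p \<and> (\<forall>e>0. emeasure lborel (E \<inter> ball p e) > 0)}"

lemma E_sets[measurable]: "E \<in> sets borel"
  unfolding E_def by measurable

lemma E_pos: "emeasure lborel E > 0"
proof (rule ccontr)
  assume "\<not> emeasure lborel E > 0"
  then have "E \<in> null_sets lborel" by (intro null_setsI) (auto simp: not_gr_zero)
  then have "AE a in lborel. a \<notin> E" by (rule AE_not_in)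
  then have "AE a in lborel. indicator {0<..} a *\<^sub>R (\<beta> a * exp (- \<mu> * a)) = 0"
  proof eventually_elim
    case (elim a)
    show ?case
    proof (cases "a > 0")
      case True
      then have "\<beta> a = 0" using elim beta_nonneg[OF True] unfolding E_def by auto
      then show ?thesis by simp
    qed simp
  qed
  then have "(LINT a:{0<..}|lborel. \<beta> a * exp (- \<mu> * a)) = 0"
    unfolding set_lebesgue_integral_def by (rule integral_eq_zero_AE)
  then show False using beta_norm by simp
qed

lemma interval_pos: assumes l: "l > 0"
  shows "\<exists>k::nat. emeasure lborel (E \<inter> {real k * l .. (real k + 1) * l}) > 0"
proof (rule ccontr)
  assume "\<not> ?thesis"
  then have z: "E \<inter> {real k * l .. (real k + 1) * l} \<in> null_sets lborel" for k
    by (intro null_setsI) (auto simp: not_gr_zero)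
  have "E \<subseteq> (\<Union>k. E \<inter> {real k * l .. (real k + 1) * l})"
  proof
    fix a assume a: "a \<in> E"
    then have a0: "a > 0" unfolding E_def by auto
    define k where "k = nat \<lfloor>a / l\<rfloor>"
    have fl: "0 \<le> \<lfloor>a / l\<rfloor>" using a0 l by simp
    have rk: "real k = of_int \<lfloor>a / l\<rfloor>" unfolding k_def using fl by simp
    have "real k \<le> a / l" "a / l < real k + 1" unfolding rk by linarith+
    then have "real k * l \<le> a" "a < (real k + 1) * l" using l by (simp_all add: field_simps)
    then show "a \<in> (\<Union>k. E \<inter> {real k * l .. (real k + 1) * l})" using a by auto
  qed
  moreover have "(\<Union>k. E \<inter> {real k * l .. (real k + 1) * l}) \<in> null_sets lborel"
    using z by blast
  ultimately have "E \<in> null_sets lborel" using null_sets_subset[of _ lborel E] by auto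
  then show False using E_pos by auto
qed

lemma EP_negl: "negligible (E - P)"
proof (subst locally_negligible_alt, intro ballI)
  fix x assume x: "x \<in> E - P"
  then have x0: "x > 0" unfolding E_def by auto
  then obtain e where e: "e > 0" "\<not> emeasure lborel (E \<inter> ball x e) > 0"
    using x unfolding P_def by auto
  then have "E \<inter> ball x e \<in> null_sets lborel" by (intro null_setsI) (auto simp: not_gr_zero)
  then have "negligible (E \<inter> ball x e)"
    unfolding negligible_iff_null_sets by (rule null_sets_completionI)
  then have "negligible ((E - P) \<inter> ball x e)" by (rule negligible_subset) auto
  then show "\<exists>U. openin (top_of_set (E - P)) U \<and> x \<in> U \<and> negligible U"
    using x e by (intro exI[of _ "(E - P) \<inter> ball x e"]) auto
qed

lemma two_supp: assumes L: "L > 0" shows "\<exists>p q. p \<in> P \<and> q \<in> P \<and> p < q \<and> q - p < L"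
proof (rule ccontr)
  assume no: "\<not> ?thesis"
  define l where "l = L / 2"
  have l: "l > 0" "l < L" using L unfolding l_def by auto
  obtain k :: nat where k: "emeasure lborel (E \<inter> {real k * l .. (real k + 1) * l}) > 0"
    using interval_pos[OF l(1)] by blast
  define I where "I = {real k * l .. (real k + 1) * l}"
  have diam: "\<bar>x - y\<bar> \<le> l" if "x \<in> I" "y \<in> I" for x y
    using that unfolding I_def by (auto simp: algebra_simps)
  have uniq: "x = y" if "x \<in> P \<inter> I" "y \<in> P \<inter> I" for x y
  proof (rule ccontr)
    assume "x \<noteq> y"
    then consider "x < y" | "y < x" by linarith
    then show False
    proof cases
      case 1
      have "y - x < L" using diam[of x y] that l 1 by auto
      then show False using no that 1 by auto
    next
      case 2
      have "x - y < L" using diam[of x y] that l 2 by auto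
      then show False using no that 2 by auto
    qed
  qed
  obtain p0 where p0: "P \<inter> I \<subseteq> {p0}"
  proof (cases "P \<inter> I = {}")
    case True then show ?thesis using that by blast
  next
    case False
    then obtain p where "p \<in> P \<inter> I" by blast
    then show ?thesis using that uniq by blast
  qed
  have "E \<inter> I \<subseteq> (E - P) \<union> {p0}" using p0 by auto
  moreover have "negligible ((E - P) \<union> {p0})" using EP_negl by simp
  ultimately have "negligible (E \<inter> I)" by (rule negligible_subset[rotated])
  then have "E \<inter> I \<in> null_sets lebesgue" unfolding negligible_iff_null_sets .
  then have "E \<inter> I \<in> null_sets lborel"
    by (subst (asm) null_sets_completion_iff) (auto simp: I_def)
  then show False using k unfolding I_def by auto
qed

lemma shift: assumes p: "p \<in> P" and s: "s > 0" and bs: "b s > 0" shows "b (s + p) > 0"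
proof -
  have p0: "p > 0" using p unfolding P_def by auto
  define t where "t = s + p"
  have t0: "t \<ge> 0" using s p0 unfolding t_def by simp
  obtain d where d: "d > 0" "\<forall>x. x \<ge> 0 \<and> \<bar>x - s\<bar> < d \<longrightarrow> b x > 0"
    using b_pos_nbhd[of s] s bs by auto
  define e where "e = min d (min s p)"
  have e: "e > 0" "e \<le> d" "e \<le> s" "e \<le> p" using d s p0 unfolding e_def by auto
  have mpos: "emeasure lborel (E \<inter> ball p e) > 0" using p e unfolding P_def by auto
  have pos: "\<beta> a * exp (- \<mu> * a) * b (t - a) > 0" and ain: "a \<in> {0<..<t}"
    if a: "a \<in> E \<inter> ball p e" for a
  proof -
    have ad: "\<bar>a - p\<bar> < e" using a by (auto simp: dist_real_def abs_minus_commute)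
    show "a \<in> {0<..<t}" using ad e unfolding t_def by auto
    have "t - a \<ge> 0" "\<bar>(t - a) - s\<bar> < d" using ad e unfolding t_def by auto
    then have "b (t - a) > 0" using d by auto
    moreover have "\<beta> a > 0" using a unfolding E_def by auto
    ultimately show "\<beta> a * exp (- \<mu> * a) * b (t - a) > 0" by simp
  qed
  have Gpos: "G t > 0"
  proof (rule ccontr)
    assume "\<not> G t > 0"
    moreover have "G t \<ge> 0" using t0 b_nonneg by (intro G_nonneg) auto
    ultimately have G0: "G t = 0" by simp
    have int: "integrable lborel (\<lambda>a. indicator {0<..<t} a *\<^sub>R (\<beta> a * exp (- \<mu> * a) * b (t - a)))"
      using G_int[OF t0] unfolding set_integrable_def .
    have nn: "AE a in lborel. 0 \<le> indicator {0<..<t} a *\<^sub>R (\<beta> a * exp (- \<mu> * a) * b (t - a))"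
      using g_nonneg b_nonneg by (intro AE_I2) (auto simp: indicator_def)
    have "AE a in lborel. indicator {0<..<t} a *\<^sub>R (\<beta> a * exp (- \<mu> * a) * b (t - a)) = 0"
      using G0 integral_nonneg_eq_0_iff_AE[OF int nn] unfolding G_def set_lebesgue_integral_def by simp
    then have "AE a in lborel. a \<notin> E \<inter> ball p e"
    proof eventually_elim
      case (elim a)
      show ?case
      proof
        assume a: "a \<in> E \<inter> ball p e"
        then show False using elim pos[OF a] ain[OF a] by (auto simp: indicator_def)
      qed
    qed
    then obtain N where N: "{x \<in> space lborel. \<not> x \<notin> E \<inter> ball p e} \<subseteq> N" "emeasure lborel N = 0" "N \<in> sets lborel"
      by (rule AE_E)
    then have "emeasure lborel (E \<inter> ball p e) \<le> emeasure lborel N"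
      by (intro emeasure_mono) auto
    then show False using N(2) mpos by simp
  qed
  have "F t + G t > 0" using F_nonneg[OF t0] Gpos by simp
  then show ?thesis using bI[OF t0] alpha_pos fR_pos_iff unfolding t_def by simp
qed

lemma P_pos: "p \<in> P \<Longrightarrow> p > 0" unfolding P_def by auto

lemma iter: assumes p: "p \<in> P" and q: "q \<in> P" and s: "s > 0" and bs: "b s > 0"
  shows "b (s + real n * p + real m * q) > 0"
proof (induction n)
  case 0
  show ?case
  proof (induction m)
    case 0 then show ?case using bs by simp
  next
    case (Suc m)
    have "real m * q \<ge> 0" using P_pos[OF q] by simp
    then have pos: "s + real 0 * p + real m * q > 0" using s by simp
    have "b ((s + real 0 * p + real m * q) + q) > 0" by (rule shift[OF q pos Suc])
    then show ?case by (simp add: algebra_simps)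
  qed
next
  case (Suc n)
  have "real m * q \<ge> 0" "real n * p \<ge> 0" using P_pos[OF q] P_pos[OF p] by simp_all
  then have pos: "s + real n * p + real m * q > 0" using s by linarith
  have "b ((s + real n * p + real m * q) + p) > 0" by (rule shift[OF p pos Suc])
  then show ?case by (simp add: algebra_simps)
qed

lemma main: "\<exists>t0>0. \<forall>t\<ge>t0. b t > 0"
proof -
  obtain s0 L where sL: "s0 \<ge> 0" "L > 0" "\<And>s. s0 < s \<Longrightarrow> s < s0 + L \<Longrightarrow> b s > 0"
    using pos_interval by blast
  obtain p q where pq: "p \<in> P" "q \<in> P" "p < q" "q - p < L" using two_supp[OF sL(2)] by blast
  have p0: "p > 0" using P_pos[OF pq(1)] .
  define d where "d = q - p"
  have d: "d > 0" "d < L" using pq unfolding d_def by auto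
  define T where "T = s0 + L + p * (1 + p / d) + 1"
  have T0: "T > 0" unfolding T_def using sL p0 d by (simp add: add_pos_pos)
  show ?thesis
  proof (intro exI[of _ T] conjI allI impI T0)
    fix t assume tT: "T \<le> t"
    define y where "y = t - s0 - L"
    have yge: "y \<ge> p * (1 + p / d)" using tT unfolding T_def y_def by simp
    have y0: "y \<ge> 0" using yge p0 d by (smt (verit) divide_pos_pos mult_pos_pos)
    define k where "k = nat \<lfloor>y / p\<rfloor>"
    have rk: "real k = of_int \<lfloor>y / p\<rfloor>" unfolding k_def using y0 p0 by simp
    have k1: "real k \<le> y / p" "y / p < real k + 1" unfolding rk by linarith+
    then have k2: "real k * p \<le> y" "y < real k * p + p" using p0 by (simp_all add: field_simps)
    define z where "z = (y - real k * p) / d"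
    have z0: "z \<ge> 0" unfolding z_def using k2 d by simp
    have zlt: "z < p / d" unfolding z_def using k2 d by (simp add: divide_strict_right_mono)
    define m where "m = nat (\<lfloor>z\<rfloor> + 1)"
    have rm: "real m = of_int \<lfloor>z\<rfloor> + 1" unfolding m_def using z0 by simp
    have m1: "z < real m" "real m \<le> z + 1" unfolding rm by linarith+
    have "p / d \<le> y / p - 1"
    proof -
      have "1 + p / d \<le> y / p" using yge p0 by (simp add: pos_le_divide_eq mult.commute)
      then show ?thesis by simp
    qed
    then have "real m < real k + 1" using m1 zlt k1 by linarith
    then have mk: "m \<le> k" by linarith
    define X where "X = real (k - m) * p + real m * q"
    have X: "X = real k * p + real m * d" unfolding X_def d_def using mk by (simp add: of_nat_diff algebra_simps)
    have "real m * d > z * d" using m1 d by simp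
    then have Xgt: "X > y" unfolding X z_def using d by simp
    have "real m * d \<le> (z + 1) * d" using m1 d by (intro mult_right_mono) auto
    moreover have "(z + 1) * d = y - real k * p + d" unfolding z_def using d by (simp add: field_simps)
    ultimately have Xle: "X \<le> y + d" unfolding X by linarith
    define s where "s = t - X"
    have s1: "s0 < s" "s < s0 + L" using Xgt Xle d unfolding s_def y_def by auto
    then have bs: "b s > 0" using sL(3) by blast
    have s0': "s > 0" using s1 sL(1) by simp
    have "b (s + real (k - m) * p + real m * q) > 0" by (rule iter[OF pq(1,2) s0' bs])
    moreover have "s + real (k - m) * p + real m * q = t" unfolding s_def X_def by simp
    ultimately show "b t > 0" by simp
  qed
qed

end

theorem proposition3p6:
  fixes \<mu> \<alpha> :: real and \<beta> u0 b :: "real \<Rightarrow> real"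
  assumes mu_pos: "\<mu> > 0" and alpha_pos: "\<alpha> > 0"
    and beta_meas: "\<beta> \<in> borel_measurable lborel"
    and beta_nonneg: "\<forall>a>0. 0 \<le> \<beta> a"
    and beta_bdd: "\<exists>C. \<forall>a>0. \<beta> a \<le> C"
    and beta_norm: "(LINT a:{0<..}|lborel. \<beta> a * exp (- \<mu> * a)) = 1"
    and u0_M0: "in_M0 \<mu> \<beta> u0"
    and b_cont: "continuous_on {0..} b"
    and b_eq: "\<forall>t\<ge>0. b t = \<alpha> * fR ((LINT a:{t<..}|lborel. \<beta> a * exp (- \<mu> * t) * u0 (a - t))
                                 + (LINT a:{0<..<t}|lborel. \<beta> a * exp (- \<mu> * a) * b (t - a)))"
  shows "\<exists>t0>0. \<forall>t\<ge>t0. b t > 0"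
proof -
  obtain C where C: "\<forall>a>0. \<beta> a \<le> C" using beta_bdd by blast
  interpret agemodel \<mu> \<alpha> \<beta> u0 b C
  proof
    show "\<beta> \<in> borel_measurable borel" using beta_meas by simp
  qed (use assms C in auto)
  show ?thesis by (rule main)
qed

end
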